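(* Let $n\geq 2$. The automorphism group $\mathrm{Aut}(\mathbf{D}_{n,<_1,\ldots,<_n})$, with the topology of pointwise convergence, is extremely amenable.
   Context: Fix $n\geq 2$ and a set $D_n\subseteq\mathbb{Q}^n$ which is dense in $\mathbb{Q}^n$ (product topology) and such that no two distinct points of $D_n$ share a common coordinate. $\mathbf{D}_{n,<_1,\ldots,<_n}=(D_n,<,<_1,\ldots,<_n)$ where $<$ is the product order ($\mathbf{a}<\mathbf{b}$ iff $a_i\leq b_i$ for all $i$ and $\mathbf{a}\neq\mathbf{b}$) and $\mathbf{a}<_i\mathbf{b}$ iff $a_i<b_i$. Automorphisms are bijections of $D_n$ preserving and reflecting all of $<,<_1,\ldots,<_n$. A topological group is extremely amenable if every continuous action of it on a compact Hausdorff space has a fixed point. *)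

theory Defs
  imports "HOL-Analysis.Analysis"
begin

text \<open>Points of Q^n are functions from a finite index type 'n to rat (n = CARD('n)).\<close>

text \<open>Density in Q^n with the product topology: every nonempty basic open box
  (product of open rational intervals) meets D.\<close>
definition dense_Qn :: "('n \<Rightarrow> rat) set \<Rightarrow> bool" where
  "dense_Qn D \<longleftrightarrow> (\<forall>a b. (\<forall>i. a i < b i) \<longrightarrow> (\<exists>d\<in>D. \<forall>i. a i < d i \<and> d i < b i))"

definition no_common_coord :: "('n \<Rightarrow> rat) set \<Rightarrow> bool" where
  "no_common_coord D \<longleftrightarrow> (\<forall>a\<in>D. \<forall>b\<in>D. a \<noteq> b \<longrightarrow> (\<forall>i. a i \<noteq> b i))"

definition prod_less :: "('n \<Rightarrow> rat) \<Rightarrow> ('n \<Rightarrow> rat) \<Rightarrow> bool" where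
  "prod_less a b \<longleftrightarrow> (\<forall>i. a i \<le> b i) \<and> a \<noteq> b"

text \<open>Automorphisms of (D, <, <_1, ..., <_n), as functions restricted to D.\<close>
definition Aut :: "('n \<Rightarrow> rat) set \<Rightarrow> (('n \<Rightarrow> rat) \<Rightarrow> ('n \<Rightarrow> rat)) set" where
  "Aut D = {f \<in> extensional D. bij_betw f D D \<and>
     (\<forall>a\<in>D. \<forall>b\<in>D. (prod_less (f a) (f b) \<longleftrightarrow> prod_less a b) \<and>
                   (\<forall>i. f a i < f b i \<longleftrightarrow> a i < b i))}"

text \<open>Topology of pointwise convergence: subspace of the product D^D of discrete spaces.\<close>
definition aut_topology :: "('n \<Rightarrow> rat) set \<Rightarrow> (('n \<Rightarrow> rat) \<Rightarrow> ('n \<Rightarrow> rat)) topology" where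
  "aut_topology D = subtopology (product_topology (\<lambda>_. discrete_topology D) D) (Aut D)"

text \<open>A continuous action of Aut(D) (group law: composition, identity: id on D) on X.\<close>
definition continuous_aut_action ::
  "('n \<Rightarrow> rat) set \<Rightarrow> 'b topology \<Rightarrow> ((('n \<Rightarrow> rat) \<Rightarrow> ('n \<Rightarrow> rat)) \<Rightarrow> 'b \<Rightarrow> 'b) \<Rightarrow> bool" where
  "continuous_aut_action D X act \<longleftrightarrow>
     continuous_map (prod_topology (aut_topology D) X) X (\<lambda>(g, x). act g x) \<and>
     (\<forall>x\<in>topspace X. act (restrict id D) x = x) \<and>
     (\<forall>g\<in>Aut D. \<forall>h\<in>Aut D. \<forall>x\<in>topspace X. act (compose D g h) x = act g (act h x))"

end

theory Submission
  imports Defs "HOL-Library.Ramsey"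
begin


definition good :: "(('n \<Rightarrow> rat) \<times> ('n \<Rightarrow> rat)) set \<Rightarrow> bool" where
  "good R \<longleftrightarrow> (\<forall>x y x' y'. (x,y)\<in>R \<longrightarrow> (x',y')\<in>R \<longrightarrow> (\<forall>i. x i < x' i \<longleftrightarrow> y i < y' i))"

lemma good_func: assumes "good R" "(x,y)\<in>R" "(x,y')\<in>R" shows "y = y'"
proof
  fix i
  have "\<not> y i < y' i" "\<not> y' i < y i" using assms unfolding good_def by blast+
  then show "y i = y' i" by simp
qed

lemma good_inj: assumes "good R" "(x,y)\<in>R" "(x',y)\<in>R" shows "x = x'"
proof
  fix i
  have "\<not> x i < x' i" "\<not> x' i < x i" using assms unfolding good_def by blast+
  then show "x i = x' i" by simp
qed

lemma good_converse: "good R \<Longrightarrow> good (R\<inverse>)"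
  unfolding good_def by blast

lemma good_mono: "good R \<Longrightarrow> S \<subseteq> R \<Longrightarrow> good S"
  unfolding good_def by blast

lemma fwd_ext:
  fixes D :: "('n::finite \<Rightarrow> rat) set"
  assumes dense: "dense_Qn D" and ncc: "no_common_coord D"
    and gR: "good R" and fR: "finite R" and RD: "R \<subseteq> D \<times> D" and zD: "z \<in> D"
  shows "\<exists>z'\<in>D. good (insert (z,z') R)"
proof (cases "z \<in> Domain R")
  case True
  then obtain z0 where "(z,z0) \<in> R" by blast
  then have "z0 \<in> D" "insert (z,z0) R = R" using RD by auto
  then show ?thesis using gR by metis
next
  case False
  define Lo where "Lo i = (\<lambda>(y,y'). y' i) ` {p\<in>R. fst p i < z i}" for i
  define Hi where "Hi i = (\<lambda>(y,y'). y' i) ` {p\<in>R. z i < fst p i}" for i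
  have fLo: "finite (Lo i)" and fHi: "finite (Hi i)" for i using fR unfolding Lo_def Hi_def by auto
  have LH: "u < w" if uw: "u \<in> Lo i" "w \<in> Hi i" for u w i
  proof -
    obtain y y' where 1: "(y,y')\<in>R" "y i < z i" "u = y' i" using uw(1) unfolding Lo_def by force
    obtain x x' where 2: "(x,x')\<in>R" "z i < x i" "w = x' i" using uw(2) unfolding Hi_def by force
    have "y i < x i" using 1 2 by simp
    then show ?thesis using gR 1 2 unfolding good_def by blast
  qed
  define lo where "lo i = (if Lo i = {} then (if Hi i = {} then 0 else Min (Hi i) - 1) else Max (Lo i))" for i
  define hi where "hi i = (if Hi i = {} then lo i + 1 else Min (Hi i))" for i
  have lohi: "lo i < hi i" for i
  proof (cases "Lo i = {}")
    case True then show ?thesis unfolding lo_def hi_def by auto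
  next
    case False
    show ?thesis
    proof (cases "Hi i = {}")
      case True then show ?thesis unfolding hi_def by auto
    next
      case F2: False
      have "Max (Lo i) \<in> Lo i" "Min (Hi i) \<in> Hi i" using False F2 fLo fHi by auto
      then show ?thesis using LH False F2 unfolding lo_def hi_def by auto
    qed
  qed
  obtain z' where z'D: "z' \<in> D" and z'b: "\<And>i. lo i < z' i \<and> z' i < hi i"
    using dense lohi unfolding dense_Qn_def by blast
  have below: "y' i < z' i" if "(y,y')\<in>R" "y i < z i" for y y' i
  proof -
    have "y' i \<in> Lo i" using that unfolding Lo_def by force
    then have "y' i \<le> lo i" using fLo unfolding lo_def by auto
    then show ?thesis using z'b[of i] by simp
  qed
  have above: "z' i < y' i" if "(y,y')\<in>R" "z i < y i" for y y' i
  proof -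
    have "y' i \<in> Hi i" using that unfolding Hi_def by force
    then have "hi i \<le> y' i" using fHi unfolding hi_def by auto
    then show ?thesis using z'b[of i] by simp
  qed
  have neq: "y i \<noteq> z i" if "(y,y')\<in>R" for y y' i
  proof -
    have "y \<noteq> z" using False that by blast
    moreover have "y \<in> D" using RD that by blast
    ultimately show ?thesis using ncc zD unfolding no_common_coord_def by blast
  qed
  have A: "y i < z i \<longleftrightarrow> y' i < z' i" if "(y,y')\<in>R" for y y' i
    using below[OF that] above[OF that] neq[OF that, of i]
    by (metis linorder_neqE order_less_asym)
  have B: "z i < y i \<longleftrightarrow> z' i < y' i" if "(y,y')\<in>R" for y y' i
    using below[OF that] above[OF that] neq[OF that, of i]
    by (metis linorder_neqE order_less_asym)
  have "good (insert (z,z') R)"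
    unfolding good_def
  proof (intro allI impI)
    fix x y x' y' i
    assume "(x,y) \<in> insert (z,z') R" "(x',y') \<in> insert (z,z') R"
    then show "x i < x' i \<longleftrightarrow> y i < y' i"
      using A B gR unfolding good_def by auto
  qed
  then show ?thesis using z'D by blast
qed

definition fwd :: "('n \<Rightarrow> rat) set \<Rightarrow> (('n \<Rightarrow> rat) \<times> ('n \<Rightarrow> rat)) set \<Rightarrow> ('n \<Rightarrow> rat) \<Rightarrow> (('n \<Rightarrow> rat) \<times> ('n \<Rightarrow> rat)) set" where
  "fwd D R z = insert (z, SOME z'. z' \<in> D \<and> good (insert (z,z') R)) R"

definition bwd where "bwd D R z = (fwd D (R\<inverse>) z)\<inverse>"

primrec chain where
  "chain D R0 s 0 = R0"
| "chain D R0 s (Suc k) = bwd D (fwd D (chain D R0 s k) (s k)) (s k)"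

definition invar where "invar D R \<longleftrightarrow> good R \<and> finite R \<and> R \<subseteq> D \<times> D"

lemma fwd_props:
  fixes D :: "('n::finite \<Rightarrow> rat) set"
  assumes dense: "dense_Qn D" and ncc: "no_common_coord D" and inv: "invar D R" and zD: "z \<in> D"
  shows "invar D (fwd D R z)" "R \<subseteq> fwd D R z" "z \<in> Domain (fwd D R z)"
proof -
  let ?P = "\<lambda>z'. z' \<in> D \<and> good (insert (z,z') R)"
  have "\<exists>z'. ?P z'" using fwd_ext[OF dense ncc _ _ _ zD] inv unfolding invar_def by blast
  then have "?P (SOME z'. ?P z')" by (rule someI_ex)
  then show "invar D (fwd D R z)" using inv zD unfolding invar_def fwd_def by auto
  show "R \<subseteq> fwd D R z" "z \<in> Domain (fwd D R z)" unfolding fwd_def by auto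
qed

lemma invar_converse: "invar D R \<Longrightarrow> invar D (R\<inverse>)"
  unfolding invar_def using good_converse by auto

lemma bwd_props:
  fixes D :: "('n::finite \<Rightarrow> rat) set"
  assumes dense: "dense_Qn D" and ncc: "no_common_coord D" and inv: "invar D R" and zD: "z \<in> D"
  shows "invar D (bwd D R z)" "R \<subseteq> bwd D R z" "z \<in> Range (bwd D R z)"
proof -
  note f = fwd_props[OF dense ncc invar_converse[OF inv] zD]
  show "invar D (bwd D R z)" unfolding bwd_def using invar_converse[OF f(1)] .
  show "R \<subseteq> bwd D R z" unfolding bwd_def using f(2) by auto
  show "z \<in> Range (bwd D R z)" unfolding bwd_def using f(3) by auto
qed

lemma chain_props:
  fixes D :: "('n::finite \<Rightarrow> rat) set"
  assumes dense: "dense_Qn D" and ncc: "no_common_coord D" and inv: "invar D R0" and sD: "range s \<subseteq> D"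
  shows "invar D (chain D R0 s k) \<and> chain D R0 s k \<subseteq> chain D R0 s (Suc k)
     \<and> s k \<in> Domain (chain D R0 s (Suc k)) \<and> s k \<in> Range (chain D R0 s (Suc k))"
proof (induction k)
  case 0
  have sk: "s 0 \<in> D" using sD by auto
  note f = fwd_props[OF dense ncc inv sk]
  note b = bwd_props[OF dense ncc f(1) sk]
  show ?case using f b inv by auto
next
  case (Suc k)
  have sk: "s (Suc k) \<in> D" using sD by auto
  note f = fwd_props[OF dense ncc Suc[THEN conjunct1] sk]
  have skk: "s k \<in> D" using sD by auto
  have i1: "invar D (chain D R0 s (Suc k))"
    using bwd_props(1)[OF dense ncc fwd_props(1)[OF dense ncc Suc[THEN conjunct1] skk] skk] by simp
  note f = fwd_props[OF dense ncc i1 sk]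
  note b = bwd_props[OF dense ncc f(1) sk]
  show ?case using f b i1 by auto
qed

lemma homog:
  fixes D :: "('n::finite \<Rightarrow> rat) set"
  assumes dense: "dense_Qn D" and ncc: "no_common_coord D"
    and fB: "finite B" and BD: "B \<subseteq> D" and phD: "\<forall>y\<in>B. \<phi> y \<in> D"
    and emb: "\<forall>y\<in>B. \<forall>y'\<in>B. \<forall>i. \<phi> y i < \<phi> y' i \<longleftrightarrow> y i < y' i"
  shows "\<exists>k\<in>Aut D. \<forall>y\<in>B. k y = \<phi> y"
proof -
  define R0 where "R0 = (\<lambda>y. (y, \<phi> y)) ` B"
  have inv0: "invar D R0" unfolding invar_def good_def R0_def using fB BD phD emb by auto
  have Dne: "D \<noteq> {}"
  proof -
    have "\<exists>d\<in>D. \<forall>i. (\<lambda>_::'n. 0::rat) i < d i \<and> d i < (\<lambda>_. 1) i"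
      using dense[unfolded dense_Qn_def, rule_format, of "\<lambda>_. 0" "\<lambda>_. 1"] by simp
    then show ?thesis by blast
  qed
  have cD: "countable D" by (rule countable_subset[of _ UNIV]) auto
  define s where "s = from_nat_into D"
  have rs: "range s = D" unfolding s_def using range_from_nat_into[OF Dne cD] .
  let ?C = "chain D R0 s"
  note cp = chain_props[OF dense ncc inv0 equalityD1[OF rs]]
  have mono: "?C k \<subseteq> ?C k'" if "k \<le> k'" for k k'
    by (rule lift_Suc_mono_le[of ?C, OF _ that]) (use cp in blast)
  define U where "U = (\<Union>k. ?C k)"
  have UD: "U \<subseteq> D \<times> D" using cp unfolding U_def invar_def by blast
  have gU: "good U" unfolding good_def
  proof (intro allI impI)
    fix x y x' y' i assume "(x,y) \<in> U" "(x',y') \<in> U"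
    then obtain k k' where "(x,y) \<in> ?C k" "(x',y') \<in> ?C k'" unfolding U_def by blast
    then have "(x,y) \<in> ?C (max k k')" "(x',y') \<in> ?C (max k k')" using mono by (meson max.cobounded1 max.cobounded2 subsetD)+
    moreover have "good (?C (max k k'))" using cp unfolding invar_def by blast
    ultimately show "x i < x' i \<longleftrightarrow> y i < y' i" unfolding good_def by blast
  qed
  have domU: "\<exists>w. (z,w) \<in> U" if zD: "z \<in> D" for z
  proof -
    obtain k where "z = s k" using rs zD by auto
    then show ?thesis using cp unfolding U_def by blast
  qed
  have ranU: "\<exists>z. (z,w) \<in> U" if wD: "w \<in> D" for w
  proof -
    obtain k where "w = s k" using rs wD by auto
    then show ?thesis using cp unfolding U_def by blast
  qed
  have R0U: "R0 \<subseteq> U" unfolding U_def by (metis UNIV_I UN_upper chain.simps(1))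
  define F where "F = restrict (\<lambda>z. SOME w. (z,w) \<in> U) D"
  have FU: "(z, F z) \<in> U" if "z \<in> D" for z
  proof -
    have "(z, SOME w. (z,w)\<in>U) \<in> U" by (rule someI_ex[OF domU[OF that]])
    then show ?thesis unfolding F_def using that by simp
  qed
  have Fval: "F z = w" if "(z,w) \<in> U" for z w
  proof -
    have "z \<in> D" using that UD by auto
    then show ?thesis using FU good_func[OF gU that] by blast
  qed
  have FD: "F z \<in> D" if "z \<in> D" for z using FU[OF that] UD by auto
  have Ford: "F a i < F b i \<longleftrightarrow> a i < b i" if "a \<in> D" "b \<in> D" for a b i
    using gU FU[OF that(1)] FU[OF that(2)] unfolding good_def by blast
  have Finj: "inj_on F D"
  proof (rule inj_onI)
    fix a b assume ab: "a \<in> D" "b \<in> D" "F a = F b"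
    have "(a, F a) \<in> U" using FU ab(1) .
    moreover have "(b, F a) \<in> U" using FU[OF ab(2)] ab(3) by simp
    ultimately
    show "a = b" using good_inj[OF gU] by blast
  qed
  have Fsurj: "F ` D = D"
  proof
    show "F ` D \<subseteq> D" using FD by auto
    show "D \<subseteq> F ` D"
    proof
      fix w assume "w \<in> D"
      then obtain z where z: "(z,w) \<in> U" using ranU by blast
      then have "z \<in> D" using UD by auto
      then show "w \<in> F ` D" using Fval[OF z] by auto
    qed
  qed
  have "F \<in> Aut D"
    unfolding Aut_def
  proof (intro CollectI conjI ballI allI)
    show "F \<in> extensional D" unfolding F_def by simp
    show "bij_betw F D D" using Finj Fsurj by (simp add: bij_betw_def)
    fix a b i assume ab: "a \<in> D" "b \<in> D"
    show "F a i < F b i \<longleftrightarrow> a i < b i" using Ford[OF ab] .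
    have le: "F a i \<le> F b i \<longleftrightarrow> a i \<le> b i" for i using Ford[OF ab(2) ab(1), of i] by (simp add: not_less[symmetric])
    have ne: "F a \<noteq> F b \<longleftrightarrow> a \<noteq> b" using Finj ab by (auto dest: inj_onD)
    show "prod_less (F a) (F b) \<longleftrightarrow> prod_less a b" unfolding prod_less_def using le ne by blast
  qed
  moreover have "\<forall>y\<in>B. F y = \<phi> y" using Fval R0U unfolding R0_def by blast
  ultimately show ?thesis by blast
qed



definition rnk :: "('x \<Rightarrow> 'k::linorder) \<Rightarrow> 'x set \<Rightarrow> 'x \<Rightarrow> nat" where
  "rnk \<kappa> S x = card {y\<in>S. \<kappa> y < \<kappa> x}"

lemma rnk_lt: "finite S \<Longrightarrow> x \<in> S \<Longrightarrow> rnk \<kappa> S x < card S"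
  unfolding rnk_def by (rule psubset_card_mono) auto

lemma rnk_mono: assumes "finite S" "x \<in> S" "y \<in> S" "\<kappa> x < \<kappa> y"
  shows "rnk \<kappa> S x < rnk \<kappa> S y"
  unfolding rnk_def using assms by (intro psubset_card_mono) auto

lemma rnk_less_iff: assumes "finite S" "inj_on \<kappa> S" "x \<in> S" "y \<in> S"
  shows "rnk \<kappa> S x < rnk \<kappa> S y \<longleftrightarrow> \<kappa> x < \<kappa> y"
proof
  assume "\<kappa> x < \<kappa> y" then show "rnk \<kappa> S x < rnk \<kappa> S y" using rnk_mono assms by metis
next
  assume 1: "rnk \<kappa> S x < rnk \<kappa> S y"
  show "\<kappa> x < \<kappa> y"
  proof (rule ccontr)
    assume "\<not> \<kappa> x < \<kappa> y"
    then have "\<kappa> y < \<kappa> x \<or> \<kappa> y = \<kappa> x" by auto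
    then show False
    proof
      assume "\<kappa> y < \<kappa> x" then show False using rnk_mono[OF assms(1,4,3), of \<kappa>] 1 by auto
    next
      assume "\<kappa> y = \<kappa> x" then have "x = y" using assms inj_onD by metis
      then show False using 1 by simp
    qed
  qed
qed

lemma rnk_inj: assumes "finite S" "inj_on \<kappa> S" shows "inj_on (rnk \<kappa> S) S"
proof (rule inj_onI)
  fix x y assume xy: "x \<in> S" "y \<in> S" "rnk \<kappa> S x = rnk \<kappa> S y"
  then have "\<not> \<kappa> x < \<kappa> y" "\<not> \<kappa> y < \<kappa> x" using rnk_less_iff[OF assms] by (metis less_irrefl)+
  then have "\<kappa> x = \<kappa> y" by auto
  then show "x = y" using assms(2) xy inj_onD by metis
qed

lemma rnk_image: assumes "finite S" "inj_on \<kappa> S" shows "rnk \<kappa> S ` S = {..<card S}"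
proof (rule card_subset_eq)
  show "finite {..<card S}" by simp
  show "rnk \<kappa> S ` S \<subseteq> {..<card S}" using rnk_lt[OF assms(1)] by auto
  show "card (rnk \<kappa> S ` S) = card {..<card S}" using card_image[OF rnk_inj[OF assms]] by simp
qed

lemma count_below:
  fixes f :: "'x \<Rightarrow> nat"
  assumes "inj_on f S" "f ` S = {..<N}" "s \<in> S"
  shows "card {q\<in>S. f q < f s} = f s"
proof -
  have "f ` {q\<in>S. f q < f s} = {..<f s}"
  proof
    show "f ` {q\<in>S. f q < f s} \<subseteq> {..<f s}" by auto
    show "{..<f s} \<subseteq> f ` {q\<in>S. f q < f s}"
    proof
      fix k assume k: "k \<in> {..<f s}"
      have "f s < N" using assms(2,3) by auto
      then have "k \<in> f ` S" using k assms(2) by auto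
      then show "k \<in> f ` {q\<in>S. f q < f s}" using k by auto
    qed
  qed
  moreover have "inj_on f {q\<in>S. f q < f s}" using assms(1) by (rule inj_on_subset) auto
  ultimately show ?thesis using card_image by fastforce
qed

definition sel :: "nat set \<Rightarrow> nat \<Rightarrow> nat" where
  "sel W k = (THE w. w \<in> W \<and> rnk id W w = k)"

lemma sel_eq: assumes "finite W" "w \<in> W" "rnk id W w = k" shows "sel W k = w"
  unfolding sel_def
proof (rule the_equality)
  show "w \<in> W \<and> rnk id W w = k" using assms by simp
  fix w' assume "w' \<in> W \<and> rnk id W w' = k"
  then show "w' = w" using rnk_inj[OF assms(1), of id] assms inj_onD by fastforce
qed

lemma sel_in: assumes "finite W" "k < card W" shows "sel W k \<in> W" "rnk id W (sel W k) = k"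
proof -
  obtain w where "w \<in> W" "rnk id W w = k" using rnk_image[OF assms(1), of id] assms(2) by (metis inj_on_id imageE lessThan_iff)
  then show "sel W k \<in> W" "rnk id W (sel W k) = k" using sel_eq[OF assms(1)] by auto
qed

lemma sel_less: assumes "finite W" "k < card W" "k' < card W"
  shows "sel W k < sel W k' \<longleftrightarrow> k < k'"
  using rnk_less_iff[OF assms(1), of id, simplified, OF sel_in(1)[OF assms(1,2)] sel_in(1)[OF assms(1,3)]]
    sel_in(2)[OF assms(1,2)] sel_in(2)[OF assms(1,3)] by simp

lemma lexlem:
  fixes k k' r r' N :: nat
  assumes "r < N" "r' < N"
  shows "k*N + r < k'*N + r' \<longleftrightarrow> k < k' \<or> (k = k' \<and> r < r')"
proof -
  have *: "k*N + r < k'*N + r'" if "k < k'" "r < N" for k k' r r' :: nat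
  proof -
    have "Suc k * N \<le> k' * N" using that by (intro mult_le_mono1) simp
    then show ?thesis using that by simp
  qed
  show ?thesis
  proof (cases k k' rule: linorder_cases)
    case less then show ?thesis using *[OF less assms(1)] by simp
  next
    case equal then show ?thesis by simp
  next
    case greater then show ?thesis using *[OF greater assms(2), of r] by simp
  qed
qed

lemma posb: fixes k r m b :: nat assumes "k < m" "r < b" shows "k*b + r < m*b"
proof -
  have "Suc k * b \<le> m * b" using assms by (intro mult_le_mono1) simp
  then show ?thesis using assms by simp
qed

lemma ramsey_emb:
  fixes D :: "('n::finite \<Rightarrow> rat) set" and c :: "(('n \<Rightarrow> rat) \<Rightarrow> ('n \<Rightarrow> rat)) \<Rightarrow> nat"
  assumes dense: "dense_Qn D" and ncc: "no_common_coord D"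
    and fB: "finite B" and AB: "A \<subseteq> B" and BD: "B \<subseteq> D"
    and cp: "\<forall>e. c e < p"
    and loc: "\<forall>e e'. (\<forall>x\<in>A. e x = e' x) \<longrightarrow> c e = c e'"
  shows "\<exists>\<phi> t. (\<forall>y\<in>B. \<phi> y \<in> D) \<and> (\<forall>y\<in>B. \<forall>y'\<in>B. \<forall>i. \<phi> y i < \<phi> y' i \<longleftrightarrow> y i < y' i) \<and>
     (\<forall>e. (\<forall>x\<in>A. e x \<in> B) \<and> (\<forall>x\<in>A. \<forall>x'\<in>A. \<forall>i. e x i < e x' i \<longleftrightarrow> x i < x' i) \<longrightarrow> c (\<phi> \<circ> e) = t)"
proof -
  have fA: "finite A" using fB AB finite_subset by blast
  define m where "m = CARD('n)"
  obtain idx :: "'n \<Rightarrow> nat" where bidx: "bij_betw idx (UNIV::'n set) {0..<m}"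
    using ex_bij_betw_finite_nat[of "UNIV::'n set"] unfolding m_def by auto
  have idxlt: "idx i < m" for i using bidx by (auto simp: bij_betw_def)
  have idxinj: "idx i = idx j \<longleftrightarrow> i = j" for i j using bidx by (auto simp: bij_betw_def inj_on_def)
  define a where "a = card A"
  define b where "b = card B"
  have dc: "x = y" if "x \<in> D" "y \<in> D" "x i = y i" for x y i
    using ncc that unfolding no_common_coord_def by blast
  have injc: "inj_on (\<lambda>z. z i) S" if "S \<subseteq> D" for S i
    using dc that by (auto intro!: inj_onI)
  have rkless: "rnk (\<lambda>z. z i) S x < rnk (\<lambda>z. z i) S y \<longleftrightarrow> x i < y i"
    if "finite S" "S \<subseteq> D" "x \<in> S" "y \<in> S" for S x y i
    using rnk_less_iff[OF that(1) injc[OF that(2)] that(3,4)] .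
  have rklt: "rnk (\<lambda>z. z i) S x < card S" if "finite S" "x \<in> S" for S x i
    using rnk_lt[OF that] .
  have "\<forall>u. \<exists>q. q \<in> D \<and> (\<forall>i. of_nat (u i) - 1/2 < q i \<and> q i < of_nat (u i) + 1/2)"
  proof
    fix u :: "'n \<Rightarrow> nat"
    show "\<exists>q. q \<in> D \<and> (\<forall>i. of_nat (u i) - 1/2 < q i \<and> q i < of_nat (u i) + 1/2)"
      using dense[unfolded dense_Qn_def, rule_format, of "\<lambda>i. of_nat (u i) - 1/2" "\<lambda>i. of_nat (u i) + 1/2"]
      by auto
  qed
  then obtain d where dD: "\<And>u. d u \<in> D"
    and db: "\<And>u i. of_nat (u i) - 1/2 < d u i \<and> d u i < of_nat (u i) + (1/2::rat)"
    by metis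
  have dmono: "d u i < d v i" if "u i < v i" for u v i
  proof -
    have "of_nat (u i) + 1 \<le> (of_nat (v i) :: rat)" using that by (metis Suc_leI of_nat_Suc of_nat_le_iff add.commute)
    then show ?thesis using db[of u i] db[of v i] by linarith
  qed
  define cpy where "cpy W = (\<lambda>x. d (\<lambda>i. sel W (idx i * a + rnk (\<lambda>z. z i) A x)))" for W
  define f where "f W = c (cpy W)" for W
  obtain Y t where Y: "infinite Y" "t < p" "\<And>X. X \<subseteq> Y \<Longrightarrow> finite X \<Longrightarrow> card X = m*a \<Longrightarrow> f X = t"
    using Ramsey[of "UNIV::nat set" "m*a" f p] cp unfolding f_def by auto
  obtain T where T: "finite T" "card T = m*b" "T \<subseteq> Y"
    using infinite_arbitrarily_large[OF Y(1)] by blast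
  define \<phi> where "\<phi> y = d (\<lambda>i. sel T (idx i * b + rnk (\<lambda>z. z i) B y))" for y
  have phiD: "\<forall>y\<in>B. \<phi> y \<in> D" unfolding \<phi>_def using dD by simp
  have phimono: "\<phi> y i < \<phi> y' i" if "y \<in> B" "y' \<in> B" "y i < y' i" for y y' i
  proof -
    let ?P = "idx i * b + rnk (\<lambda>z. z i) B y" and ?P' = "idx i * b + rnk (\<lambda>z. z i) B y'"
    have r: "rnk (\<lambda>z. z i) B y < rnk (\<lambda>z. z i) B y'" using rkless[OF fB BD that(1,2)] that(3) by simp
    have b1: "?P < card T" "?P' < card T" unfolding T(2) b_def using posb[OF idxlt] rklt[OF fB] that by auto
    have "sel T ?P < sel T ?P'" using sel_less[OF T(1) b1] r by simp
    then show ?thesis unfolding \<phi>_def by (intro dmono) simp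
  qed
  have phiemb: "\<forall>y\<in>B. \<forall>y'\<in>B. \<forall>i. \<phi> y i < \<phi> y' i \<longleftrightarrow> y i < y' i"
  proof (intro ballI allI)
    fix y y' i assume yy: "y \<in> B" "y' \<in> B"
    show "\<phi> y i < \<phi> y' i \<longleftrightarrow> y i < y' i"
    proof (cases "y i" "y' i" rule: linorder_cases)
      case less then show ?thesis using phimono[OF yy] by simp
    next
      case equal then have "y = y'" using dc yy BD by blast
      then show ?thesis by simp
    next
      case greater then show ?thesis using phimono[OF yy(2,1)] by (meson less_asym)
    qed
  qed
  have main: "c (\<phi> \<circ> e) = t" if eB: "\<forall>x\<in>A. e x \<in> B" and eemb: "\<forall>x\<in>A. \<forall>x'\<in>A. \<forall>i. e x i < e x' i \<longleftrightarrow> x i < x' i" for e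
  proof -
    define S where "S = (UNIV::'n set) \<times> A"
    have fS: "finite S" unfolding S_def using fA by simp
    have cS: "card S = m*a" unfolding S_def m_def a_def by (simp add: card_cartesian_product)
    define \<kappa> where "\<kappa> = (\<lambda>(i,x). idx i * a + rnk (\<lambda>z. z i) A x)"
    define pos where "pos = (\<lambda>(i,x). idx i * b + rnk (\<lambda>z. z i) B (e x))"
    define val where "val q = sel T (pos q)" for q
    define W where "W = val ` S"
    have AD: "A \<subseteq> D" using AB BD by auto
    have eBD: "e ` A \<subseteq> D" using eB BD by auto
    have posT: "pos q < card T" if "q \<in> S" for q
      using that posb[OF idxlt rklt[OF fB]] eB unfolding pos_def S_def T(2) b_def by auto
    have \<kappa>lt: "\<kappa> q < m*a" if "q \<in> S" for q
      using that posb[OF idxlt rklt[OF fA]] unfolding \<kappa>_def S_def a_def by auto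
    define ch :: "'n \<times> ('n \<Rightarrow> rat) \<Rightarrow> 'n \<times> ('n \<Rightarrow> rat) \<Rightarrow> bool" where "ch = (\<lambda>(i,x) (j,x'). idx i < idx j \<or> (i = j \<and> x i < x' i))"
    have poschar: "pos q < pos q' \<longleftrightarrow> ch q q'" if qS: "q \<in> S" "q' \<in> S" for q q'
    proof -
      obtain i x j x' where q: "q = (i,x)" "q' = (j,x')" "x \<in> A" "x' \<in> A" using qS unfolding S_def by auto
      have "pos q < pos q' \<longleftrightarrow> idx i < idx j \<or> (idx i = idx j \<and> rnk (\<lambda>z. z i) B (e x) < rnk (\<lambda>z. z j) B (e x'))"
        unfolding pos_def q b_def using lexlem[OF rklt[OF fB] rklt[OF fB]] eB q by simp
      also have "\<dots> \<longleftrightarrow> ch q q'"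
        using rkless[OF fB BD, of "e x" "e x'"] eB eemb q idxinj unfolding ch_def by auto
      finally show ?thesis .
    qed
    have \<kappa>char: "\<kappa> q < \<kappa> q' \<longleftrightarrow> ch q q'" if qS: "q \<in> S" "q' \<in> S" for q q'
    proof -
      obtain i x j x' where q: "q = (i,x)" "q' = (j,x')" "x \<in> A" "x' \<in> A" using qS unfolding S_def by auto
      have "\<kappa> q < \<kappa> q' \<longleftrightarrow> idx i < idx j \<or> (idx i = idx j \<and> rnk (\<lambda>z. z i) A x < rnk (\<lambda>z. z j) A x')"
        unfolding \<kappa>_def q a_def using lexlem[OF rklt[OF fA] rklt[OF fA]] q by simp
      also have "\<dots> \<longleftrightarrow> ch q q'"
        using rkless[OF fA AD, of x x'] q idxinj unfolding ch_def by auto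
      finally show ?thesis .
    qed
    have chtri: "ch q q' \<or> ch q' q" if qS: "q \<in> S" "q' \<in> S" "q \<noteq> q'" for q q'
    proof -
      obtain i x j x' where q: "q = (i,x)" "q' = (j,x')" "x \<in> A" "x' \<in> A" using qS unfolding S_def by auto
      show ?thesis
      proof (cases "i = j")
        case True
        then have "x \<noteq> x'" using qS q by auto
        then have "x i \<noteq> x' i" using dc q AD by blast
        then show ?thesis using True unfolding ch_def q by auto
      next
        case False
        then have "idx i \<noteq> idx j" using idxinj by blast
        then show ?thesis unfolding ch_def q by auto
      qed
    qed
    have valchar: "val q < val q' \<longleftrightarrow> \<kappa> q < \<kappa> q'" if "q \<in> S" "q' \<in> S" for q q'
      unfolding val_def using sel_less[OF T(1) posT[OF that(1)] posT[OF that(2)]] poschar[OF that] \<kappa>char[OF that] by simp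
    have \<kappa>inj: "inj_on \<kappa> S"
    proof (rule inj_onI)
      fix q q' assume qq: "q \<in> S" "q' \<in> S" "\<kappa> q = \<kappa> q'"
      show "q = q'"
      proof (rule ccontr)
        assume "q \<noteq> q'"
        then have "ch q q' \<or> ch q' q" using chtri qq by blast
        then have "\<kappa> q < \<kappa> q' \<or> \<kappa> q' < \<kappa> q" using \<kappa>char qq(1,2) by blast
        then show False using qq(3) by simp
      qed
    qed
    have valinj: "inj_on val S"
    proof (rule inj_onI)
      fix q q' assume qq: "q \<in> S" "q' \<in> S" "val q = val q'"
      show "q = q'"
      proof (rule ccontr)
        assume "q \<noteq> q'"
        then have "ch q q' \<or> ch q' q" using chtri qq by blast
        then have "\<kappa> q < \<kappa> q' \<or> \<kappa> q' < \<kappa> q" using \<kappa>char qq(1,2) by blast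
        then have "val q < val q' \<or> val q' < val q" using valchar qq(1,2) by blast
        then show False using qq(3) by simp
      qed
    qed
    have \<kappa>img: "\<kappa> ` S = {..<m*a}"
    proof (rule card_subset_eq)
      show "finite {..<m*a}" by simp
      show "\<kappa> ` S \<subseteq> {..<m*a}" using \<kappa>lt by auto
      show "card (\<kappa> ` S) = card {..<m*a}" using card_image[OF \<kappa>inj] cS by simp
    qed
    have WT: "W \<subseteq> T" unfolding W_def val_def using sel_in(1)[OF T(1) posT] by auto
    have fW: "finite W" using fS unfolding W_def by simp
    have cW: "card W = m*a" unfolding W_def using card_image[OF valinj] cS by simp
    have fWt: "f W = t" using Y(3)[OF _ fW cW] WT T(3) by blast
    have selW: "sel W (\<kappa> s) = val s" if sS: "s \<in> S" for s
    proof (rule sel_eq[OF fW])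
      show "val s \<in> W" unfolding W_def using sS by simp
      have "{v\<in>W. id v < id (val s)} = val ` {q\<in>S. \<kappa> q < \<kappa> s}"
      proof
        show "{v\<in>W. id v < id (val s)} \<subseteq> val ` {q\<in>S. \<kappa> q < \<kappa> s}"
        proof
          fix v assume "v \<in> {v\<in>W. id v < id (val s)}"
          then obtain q where q: "q \<in> S" "v = val q" "val q < val s" unfolding W_def by auto
          then have "\<kappa> q < \<kappa> s" using valchar[OF q(1) sS] by simp
          then show "v \<in> val ` {q\<in>S. \<kappa> q < \<kappa> s}" using q by blast
        qed
        show "val ` {q\<in>S. \<kappa> q < \<kappa> s} \<subseteq> {v\<in>W. id v < id (val s)}"
        proof
          fix v assume "v \<in> val ` {q\<in>S. \<kappa> q < \<kappa> s}"
          then obtain q where q: "q \<in> S" "v = val q" "\<kappa> q < \<kappa> s" by blast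
          then have "val q < val s" using valchar[OF q(1) sS] by simp
          moreover have "val q \<in> W" unfolding W_def using q(1) by blast
          ultimately show "v \<in> {v\<in>W. id v < id (val s)}" using q(2) by simp
        qed
      qed
      moreover have "inj_on val {q\<in>S. \<kappa> q < \<kappa> s}" using valinj by (rule inj_on_subset) auto
      ultimately have "card {v\<in>W. id v < id (val s)} = card {q\<in>S. \<kappa> q < \<kappa> s}" by (simp add: card_image)
      also have "\<dots> = \<kappa> s" using count_below[OF \<kappa>inj \<kappa>img sS] .
      finally show "rnk id W (val s) = \<kappa> s" unfolding rnk_def .
    qed
    have cpyeq: "cpy W x = (\<phi> \<circ> e) x" if xA: "x \<in> A" for x
    proof -
      have "sel W (idx i * a + rnk (\<lambda>z. z i) A x) = sel T (idx i * b + rnk (\<lambda>z. z i) B (e x))" for i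
        using selW[of "(i,x)"] xA unfolding S_def \<kappa>_def val_def pos_def by simp
      then show ?thesis unfolding cpy_def \<phi>_def by simp
    qed
    have "\<forall>x\<in>A. (\<phi> \<circ> e) x = cpy W x" using cpyeq by simp
    then have "c (\<phi> \<circ> e) = c (cpy W)" using loc by blast
    then show ?thesis using fWt unfolding f_def by simp
  qed
  have "\<forall>e. (\<forall>x\<in>A. e x \<in> B) \<and> (\<forall>x\<in>A. \<forall>x'\<in>A. \<forall>i. e x i < e x' i \<longleftrightarrow> x i < x' i) \<longrightarrow> c (\<phi> \<circ> e) = t"
    using main by simp
  with phiD phiemb show ?thesis by (intro exI[of _ \<phi>] exI[of _ t]) simp
qed



lemma aut_maps: "g \<in> Aut D \<Longrightarrow> x \<in> D \<Longrightarrow> g x \<in> D"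
  unfolding Aut_def bij_betw_def by auto

lemma aut_ord: "g \<in> Aut D \<Longrightarrow> x \<in> D \<Longrightarrow> y \<in> D \<Longrightarrow> g x i < g y i \<longleftrightarrow> x i < y i"
  unfolding Aut_def by blast

lemma aut_pl: "g \<in> Aut D \<Longrightarrow> x \<in> D \<Longrightarrow> y \<in> D \<Longrightarrow> prod_less (g x) (g y) \<longleftrightarrow> prod_less x y"
  unfolding Aut_def by blast

lemma aut_ext: "g \<in> Aut D \<Longrightarrow> g \<in> extensional D"
  unfolding Aut_def by blast

lemma aut_inj: "g \<in> Aut D \<Longrightarrow> inj_on g D"
  unfolding Aut_def bij_betw_def by blast

lemma aut_img: "g \<in> Aut D \<Longrightarrow> g ` D = D"
  unfolding Aut_def bij_betw_def by blast

lemma aut_id: "restrict id D \<in> Aut D"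
  unfolding Aut_def by (auto simp: bij_betw_def inj_on_def)

lemma aut_compose: assumes "g \<in> Aut D" "h \<in> Aut D" shows "compose D g h \<in> Aut D"
  unfolding Aut_def
proof (intro CollectI conjI ballI allI)
  show "compose D g h \<in> extensional D" by (simp add: compose_def)
  have "bij_betw h D D" "bij_betw g D D" using assms unfolding Aut_def by auto
  then show "bij_betw (compose D g h) D D" using bij_betw_compose by blast
  fix a b i assume ab: "a \<in> D" "b \<in> D"
  have hD: "h a \<in> D" "h b \<in> D" using ab aut_maps assms by auto
  show "prod_less (compose D g h a) (compose D g h b) \<longleftrightarrow> prod_less a b"
    using ab hD aut_pl[OF assms(1) hD] aut_pl[OF assms(2) ab] by (simp add: compose_def)
  show "compose D g h a i < compose D g h b i \<longleftrightarrow> a i < b i"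
    using ab hD aut_ord[OF assms(1)] aut_ord[OF assms(2)] by (simp add: compose_def)
qed

definition ginv :: "('n \<Rightarrow> rat) set \<Rightarrow> (('n \<Rightarrow> rat) \<Rightarrow> ('n \<Rightarrow> rat)) \<Rightarrow> (('n \<Rightarrow> rat) \<Rightarrow> ('n \<Rightarrow> rat))" where
  "ginv D g = restrict (inv_into D g) D"

lemma ginv_props:
  assumes g: "g \<in> Aut D"
  shows "ginv D g \<in> Aut D" "\<And>x. x \<in> D \<Longrightarrow> g (ginv D g x) = x" "\<And>x. x \<in> D \<Longrightarrow> ginv D g (g x) = x"
    "\<And>x. x \<in> D \<Longrightarrow> ginv D g x \<in> D"
proof -
  have inj: "inj_on g D" using aut_inj[OF g] .
  have img: "g ` D = D" using aut_img[OF g] .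
  show gi: "\<And>x. x \<in> D \<Longrightarrow> g (ginv D g x) = x"
  proof -
    fix x assume x: "x \<in> D"
    then have "x \<in> g ` D" using img by simp
    then show "g (ginv D g x) = x" unfolding ginv_def using x by (simp add: f_inv_into_f)
  qed
  show ig: "\<And>x. x \<in> D \<Longrightarrow> ginv D g (g x) = x"
  proof -
    fix x assume x: "x \<in> D"
    have "g x \<in> D" using aut_maps[OF g x] .
    then show "ginv D g (g x) = x" unfolding ginv_def using inv_into_f_f[OF inj x] by simp
  qed
  show iD: "\<And>x. x \<in> D \<Longrightarrow> ginv D g x \<in> D"
  proof -
    fix x assume x: "x \<in> D"
    then have "x \<in> g ` D" using img by simp
    then show "ginv D g x \<in> D" unfolding ginv_def using x by (simp add: inv_into_into)
  qed
  show "ginv D g \<in> Aut D"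
    unfolding Aut_def
  proof (intro CollectI conjI ballI allI)
    show "ginv D g \<in> extensional D" unfolding ginv_def by simp
    have "bij_betw g D D" using g unfolding Aut_def by auto
    then have "bij_betw (inv_into D g) D D" by (rule bij_betw_inv_into)
    moreover have "bij_betw (ginv D g) D D = bij_betw (inv_into D g) D D" unfolding ginv_def by (rule bij_betw_cong) simp
    ultimately show "bij_betw (ginv D g) D D" by simp
    fix a b i assume ab: "a \<in> D" "b \<in> D"
    have "prod_less (g (ginv D g a)) (g (ginv D g b)) \<longleftrightarrow> prod_less (ginv D g a) (ginv D g b)"
      using aut_pl[OF g iD iD] ab by blast
    then show "prod_less (ginv D g a) (ginv D g b) \<longleftrightarrow> prod_less a b" using gi ab by simp
    have "g (ginv D g a) i < g (ginv D g b) i \<longleftrightarrow> ginv D g a i < ginv D g b i"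
      using aut_ord[OF g iD iD] ab by blast
    then show "ginv D g a i < ginv D g b i \<longleftrightarrow> a i < b i" using gi ab by simp
  qed
qed

lemma topspace_aut: "topspace (aut_topology D) = Aut D"
proof -
  have "Aut D \<subseteq> (\<Pi>\<^sub>E i\<in>D. D)" using aut_maps aut_ext by (auto simp: PiE_def)
  then show ?thesis unfolding aut_topology_def by auto
qed

lemma act_maps:
  assumes ca: "continuous_aut_action D X act" and g: "g \<in> Aut D" and x: "x \<in> topspace X"
  shows "act g x \<in> topspace X"
proof -
  have "continuous_map (prod_topology (aut_topology D) X) X (\<lambda>(g, x). act g x)"
    using ca unfolding continuous_aut_action_def by blast
  then have "(\<lambda>(g, x). act g x) \<in> topspace (prod_topology (aut_topology D) X) \<rightarrow> topspace X"
    unfolding continuous_map_def by blast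
  moreover have "(g,x) \<in> topspace (prod_topology (aut_topology D) X)" using g x topspace_aut[of D] by simp
  ultimately show ?thesis by force
qed

lemma act_cont:
  assumes ca: "continuous_aut_action D X act" and g: "g \<in> Aut D"
  shows "continuous_map X X (act g)"
proof -
  have c: "continuous_map (prod_topology (aut_topology D) X) X (\<lambda>(g, x). act g x)"
    using ca unfolding continuous_aut_action_def by blast
  have "continuous_map X (prod_topology (aut_topology D) X) (\<lambda>x. (g, x))"
    using g topspace_aut[of D] by (intro continuous_map_pairedI) auto
  from continuous_map_compose[OF this c] show ?thesis by (simp add: o_def)
qed

lemma nbhd:
  assumes ca: "continuous_aut_action D X act" and y: "y \<in> topspace X" and W: "openin X W" "y \<in> W"
  shows "\<exists>A Ov. finite A \<and> A \<subseteq> D \<and> openin X Ov \<and> y \<in> Ov \<and>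
            (\<forall>v\<in>Aut D. (\<forall>a\<in>A. v a = a) \<longrightarrow> (\<forall>z\<in>Ov. act v z \<in> W))"
proof -
  let ?T = "prod_topology (aut_topology D) X"
  let ?P = "{p \<in> topspace ?T. (\<lambda>(g, x). act g x) p \<in> W}"
  have c: "continuous_map ?T X (\<lambda>(g, x). act g x)"
    using ca unfolding continuous_aut_action_def by blast
  have oP: "openin ?T ?P" using c W(1) unfolding continuous_map_def by blast
  have idP: "(restrict id D, y) \<in> ?P"
    using ca y W aut_id topspace_aut[of D] unfolding continuous_aut_action_def by auto
  obtain U V where UV: "openin (aut_topology D) U" "openin X V" "restrict id D \<in> U" "y \<in> V" "U \<times> V \<subseteq> ?P"
    using oP idP unfolding openin_prod_topology_alt by meson
  obtain U' where U': "openin (product_topology (\<lambda>_. discrete_topology D) D) U'" "U = U' \<inter> Aut D"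
    using UV(1) unfolding aut_topology_def openin_subtopology by blast
  have "restrict id D \<in> U'" using U'(2) UV(3) by blast
  from U'(1)[unfolded openin_product_topology_alt, rule_format, OF this]
  obtain Ub where Ub: "finite {i \<in> D. Ub i \<noteq> topspace (discrete_topology D)}"
     "restrict id D \<in> Pi\<^sub>E D Ub" "Pi\<^sub>E D Ub \<subseteq> U'"
    by blast
  define A where "A = {i \<in> D. Ub i \<noteq> D}"
  have "finite A" "A \<subseteq> D" using Ub(1) unfolding A_def by auto
  moreover have "\<forall>v\<in>Aut D. (\<forall>a\<in>A. v a = a) \<longrightarrow> (\<forall>z\<in>V. act v z \<in> W)"
  proof (intro ballI impI)
    fix v z assume v: "v \<in> Aut D" "\<forall>a\<in>A. v a = a" and z: "z \<in> V"
    have "v \<in> Pi\<^sub>E D Ub"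
    proof (rule PiE_I)
      fix i assume i: "i \<in> D"
      show "v i \<in> Ub i"
      proof (cases "i \<in> A")
        case True
        then have "v i = restrict id D i" using v i by simp
        then show ?thesis using Ub(2) i by (metis PiE_mem)
      next
        case False
        then show ?thesis using i aut_maps[OF v(1) i] unfolding A_def by auto
      qed
    next
      fix i assume "i \<notin> D" then show "v i = undefined" using aut_ext[OF v(1)] by (simp add: extensional_def)
    qed
    then have "v \<in> U" using Ub(3) U'(2) v(1) by blast
    then have "(v,z) \<in> ?P" using UV(5) z by blast
    then show "act v z \<in> W" by simp
  qed
  ultimately show ?thesis using UV(2,4) by blast
qed


lemma T2:
  assumes ca: "continuous_aut_action D X act" and comp: "compact_space X"
    and opW: "\<forall>W\<in>\<W>. openin X W" and cov: "topspace X \<subseteq> \<Union>\<W>"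
  shows "\<exists>A. finite A \<and> A \<subseteq> D \<and> (\<forall>y\<in>topspace X. \<exists>W\<in>\<W>. \<forall>v\<in>Aut D. (\<forall>a\<in>A. v a = a) \<longrightarrow> act v y \<in> W)"
proof -
  have "\<forall>y\<in>topspace X. \<exists>W A Ov. W \<in> \<W> \<and> finite A \<and> A \<subseteq> D \<and> openin X Ov \<and> y \<in> Ov \<and>
            (\<forall>v\<in>Aut D. (\<forall>a\<in>A. v a = a) \<longrightarrow> (\<forall>z\<in>Ov. act v z \<in> W))"
  proof
    fix y assume y: "y \<in> topspace X"
    then obtain W where W: "W \<in> \<W>" "y \<in> W" using cov by blast
    then show "\<exists>W A Ov. W \<in> \<W> \<and> finite A \<and> A \<subseteq> D \<and> openin X Ov \<and> y \<in> Ov \<and>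
            (\<forall>v\<in>Aut D. (\<forall>a\<in>A. v a = a) \<longrightarrow> (\<forall>z\<in>Ov. act v z \<in> W))"
      using nbhd[OF ca y _ W(2)] opW by blast
  qed
  then obtain Wf Af Of where F: "\<forall>y\<in>topspace X. Wf y \<in> \<W> \<and> finite (Af y) \<and> Af y \<subseteq> D \<and> openin X (Of y) \<and> y \<in> Of y \<and>
            (\<forall>v\<in>Aut D. (\<forall>a\<in>Af y. v a = a) \<longrightarrow> (\<forall>z\<in>Of y. act v z \<in> Wf y))"
    by metis
  have "\<exists>\<F>. finite \<F> \<and> \<F> \<subseteq> Of ` topspace X \<and> topspace X \<subseteq> \<Union>\<F>"
    using comp unfolding compact_space_alt
  proof (elim allE impE)
    show "(\<forall>U\<in>Of ` topspace X. openin X U) \<and> topspace X \<subseteq> \<Union> (Of ` topspace X)" using F by blast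
  qed
  then obtain \<F> where Fi: "finite \<F>" "\<F> \<subseteq> Of ` topspace X" "topspace X \<subseteq> \<Union>\<F>" by blast
  obtain Y where Y: "Y \<subseteq> topspace X" "finite Y" "\<F> = Of ` Y" using finite_subset_image[OF Fi(1,2)] by blast
  define A where "A = \<Union>(Af ` Y)"
  have "finite A" "A \<subseteq> D" unfolding A_def using Y F by auto
  moreover have "\<forall>z\<in>topspace X. \<exists>W\<in>\<W>. \<forall>v\<in>Aut D. (\<forall>a\<in>A. v a = a) \<longrightarrow> act v z \<in> W"
  proof
    fix z assume z: "z \<in> topspace X"
    then obtain y where y: "y \<in> Y" "z \<in> Of y" using Fi(3) Y(3) by blast
    have yX: "y \<in> topspace X" using y Y by blast
    show "\<exists>W\<in>\<W>. \<forall>v\<in>Aut D. (\<forall>a\<in>A. v a = a) \<longrightarrow> act v z \<in> W"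
    proof (intro bexI ballI impI)
      show "Wf y \<in> \<W>" using F yX by blast
      fix v assume "v \<in> Aut D" "\<forall>a\<in>A. v a = a"
      moreover have "Af y \<subseteq> A" unfolding A_def using y by blast
      ultimately show "act v z \<in> Wf y" using F yX y(2) by blast
    qed
  qed
  ultimately show ?thesis by blast
qed


lemma T3:
  fixes D :: "('n::finite \<Rightarrow> rat) set"
  assumes dense: "dense_Qn D" and ncc: "no_common_coord D"
    and ca: "continuous_aut_action D X act" and comp: "compact_space X" and x0: "x0 \<in> topspace X"
    and fW: "finite \<W>" and opW: "\<forall>W\<in>\<W>. openin X W" and cov: "topspace X \<subseteq> \<Union>\<W>"
    and f\<Gamma>: "finite \<Gamma>" and \<Gamma>G: "\<Gamma> \<subseteq> Aut D"
  shows "\<exists>x\<in>topspace X. \<exists>W\<in>\<W>. x \<in> W \<and> (\<forall>g\<in>\<Gamma>. act g x \<in> W)"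
proof -
  obtain A where A: "finite A" "A \<subseteq> D" "\<forall>y\<in>topspace X. \<exists>W\<in>\<W>. \<forall>v\<in>Aut D. (\<forall>a\<in>A. v a = a) \<longrightarrow> act v y \<in> W"
    using T2[OF ca comp opW cov] by blast
  define p where "p = card \<W>"
  obtain en where en: "bij_betw en {0..<p} \<W>" using ex_bij_betw_nat_finite[OF fW] unfolding p_def by blast
  have enW: "l < p \<Longrightarrow> en l \<in> \<W>" for l using en by (auto simp: bij_betw_def)
  have enS: "\<exists>l<p. en l = W" if "W \<in> \<W>" for W using en that by (auto simp: bij_betw_def)
  have p0: "0 < p" using x0 cov enS by (metis UnionE gr_zeroI less_zeroE subsetD)
  define fixA where "fixA v \<longleftrightarrow> v \<in> Aut D \<and> (\<forall>a\<in>A. v a = a)" for v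
  define col where "col y = (SOME l. l < p \<and> (\<forall>v. fixA v \<longrightarrow> act v y \<in> en l))" for y
  have colP: "col y < p \<and> (\<forall>v. fixA v \<longrightarrow> act v y \<in> en (col y))" if y: "y \<in> topspace X" for y
  proof -
    obtain W where W: "W \<in> \<W>" "\<forall>v\<in>Aut D. (\<forall>a\<in>A. v a = a) \<longrightarrow> act v y \<in> W" using A(3) y by blast
    obtain l where "l < p" "en l = W" using enS[OF W(1)] by blast
    then have "\<exists>l. l < p \<and> (\<forall>v. fixA v \<longrightarrow> act v y \<in> en l)" using W(2) unfolding fixA_def by blast
    then show ?thesis unfolding col_def by (rule someI_ex)
  qed
  define Pr where "Pr e h \<longleftrightarrow> h \<in> Aut D \<and> (\<forall>a\<in>A. e a \<in> D \<and> h (e a) = a)" for e h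
  define c where "c e = (if \<exists>h. Pr e h then col (act (SOME h. Pr e h) x0) else 0)" for e
  have cp: "c e < p" for e
  proof (cases "\<exists>h. Pr e h")
    case True
    then have "Pr e (SOME h. Pr e h)" by (rule someI_ex)
    then have "act (SOME h. Pr e h) x0 \<in> topspace X" using act_maps[OF ca _ x0] unfolding Pr_def by blast
    then show ?thesis using colP True unfolding c_def by simp
  next
    case False then show ?thesis using p0 unfolding c_def by auto
  qed
  have key: "act h x0 \<in> en (c e)" if h: "Pr e h" for e h
  proof -
    define h' where "h' = (SOME h. Pr e h)"
    have h': "Pr e h'" unfolding h'_def using someI[where P="Pr e", OF h] .
    have ce: "c e = col (act h' x0)" unfolding c_def h'_def using h by auto
    have hA: "h \<in> Aut D" and h'A: "h' \<in> Aut D" using h h' unfolding Pr_def by auto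
    define v where "v = compose D h (ginv D h')"
    have vA: "v \<in> Aut D" unfolding v_def using aut_compose[OF hA ginv_props(1)[OF h'A]] .
    have vfix: "v a = a" if a: "a \<in> A" for a
    proof -
      have aD: "a \<in> D" using a A(2) by blast
      have "e a \<in> D" "h' (e a) = a" using h' a unfolding Pr_def by auto
      then have "ginv D h' a = e a" using ginv_props(3)[OF h'A] by metis
      moreover have "h (e a) = a" using h a unfolding Pr_def by auto
      ultimately show ?thesis unfolding v_def compose_def using aD by simp
    qed
    have y: "act h' x0 \<in> topspace X" using act_maps[OF ca h'A x0] .
    have "act v (act h' x0) \<in> en (c e)" unfolding ce using colP[OF y] vA vfix unfolding fixA_def by blast
    moreover have "compose D v h' = h"
    proof
      fix d show "compose D v h' d = h d"
      proof (cases "d \<in> D")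
        case True
        have "h' d \<in> D" using aut_maps[OF h'A True] .
        then show ?thesis using True ginv_props(3)[OF h'A True] unfolding v_def compose_def by simp
      next
        case False then show ?thesis using aut_ext[OF hA] unfolding compose_def extensional_def by simp
      qed
    qed
    moreover have "act (compose D v h') x0 = act v (act h' x0)"
      using ca vA h'A x0 unfolding continuous_aut_action_def by blast
    ultimately show ?thesis by simp
  qed
  define B where "B = A \<union> (\<Union>g\<in>\<Gamma>. ginv D g ` A)"
  have fB: "finite B" unfolding B_def using A(1) f\<Gamma> by simp
  have BD: "B \<subseteq> D" unfolding B_def using A(2) ginv_props(4) \<Gamma>G by blast
  have AB: "A \<subseteq> B" unfolding B_def by blast
  define c' where "c' e = c (restrict e A)" for e
  have c'p: "\<forall>e. c' e < p" unfolding c'_def using cp by blast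
  have loc: "\<forall>e e'. (\<forall>x\<in>A. e x = e' x) \<longrightarrow> c' e = c' e'"
  proof (intro allI impI)
    fix e e' :: "('n \<Rightarrow> rat) \<Rightarrow> ('n \<Rightarrow> rat)" assume "\<forall>x\<in>A. e x = e' x"
    then have "restrict e A = restrict e' A" by (intro restrict_ext) simp
    then show "c' e = c' e'" unfolding c'_def by simp
  qed
  obtain \<phi> t where phiD: "\<forall>y\<in>B. \<phi> y \<in> D" and phiemb: "\<forall>y\<in>B. \<forall>y'\<in>B. \<forall>i. \<phi> y i < \<phi> y' i \<longleftrightarrow> y i < y' i"
    and mono: "\<And>e. (\<forall>x\<in>A. e x \<in> B) \<and> (\<forall>x\<in>A. \<forall>x'\<in>A. \<forall>i. e x i < e x' i \<longleftrightarrow> x i < x' i) \<Longrightarrow> c' (\<phi> \<circ> e) = t"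
    using ramsey_emb[OF dense ncc fB AB BD c'p loc] by blast
  obtain k where kA: "k \<in> Aut D" and kB: "\<forall>y\<in>B. k y = \<phi> y"
    using homog[OF dense ncc fB BD phiD phiemb] by blast
  define ki where "ki = ginv D k"
  have kiA: "ki \<in> Aut D" unfolding ki_def using ginv_props(1)[OF kA] .
  define x where "x = act ki x0"
  have xX: "x \<in> topspace X" unfolding x_def using act_maps[OF ca kiA x0] .
  have ct: "c' \<phi> = t" using mono[of id] AB by auto
  have tp: "t < p" using ct c'p by metis
  have xW: "x \<in> en t"
  proof -
    have "Pr (restrict \<phi> A) ki"
      unfolding Pr_def
    proof (intro conjI ballI kiA)
      fix a assume a: "a \<in> A"
      then have "\<phi> a = k a" "a \<in> D" using kB AB A(2) by auto
      then show "restrict \<phi> A a \<in> D" "ki (restrict \<phi> A a) = a"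
        using a aut_maps[OF kA] ginv_props(3)[OF kA] unfolding ki_def by auto
    qed
    from key[OF this] show ?thesis using ct unfolding x_def c'_def by simp
  qed
  have gW: "act g x \<in> en t" if g: "g \<in> \<Gamma>" for g
  proof -
    have gA: "g \<in> Aut D" using g \<Gamma>G by blast
    define e where "e = ginv D g"
    have eB: "\<forall>x\<in>A. e x \<in> B" unfolding e_def B_def using g by blast
    have eemb: "\<forall>x\<in>A. \<forall>x'\<in>A. \<forall>i. e x i < e x' i \<longleftrightarrow> x i < x' i"
      unfolding e_def using aut_ord[OF ginv_props(1)[OF gA]] A(2) by blast
    have ce: "c' (\<phi> \<circ> e) = t" using mono eB eemb by blast
    have "Pr (restrict (\<phi> \<circ> e) A) (compose D g ki)"
      unfolding Pr_def
    proof (intro conjI ballI aut_compose[OF gA kiA])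
      fix a assume a: "a \<in> A"
      have aD: "a \<in> D" using a A(2) by blast
      have eaB: "e a \<in> B" using eB a by blast
      have eaD: "e a \<in> D" using eaB BD by blast
      have "\<phi> (e a) = k (e a)" using kB eaB by simp
      moreover have kD: "k (e a) \<in> D" using aut_maps[OF kA eaD] .
      moreover have "ki (k (e a)) = e a" unfolding ki_def using ginv_props(3)[OF kA eaD] .
      moreover have "g (e a) = a" unfolding e_def using ginv_props(2)[OF gA aD] .
      ultimately show "restrict (\<phi> \<circ> e) A a \<in> D" "compose D g ki (restrict (\<phi> \<circ> e) A a) = a"
        using a unfolding compose_def by auto
    qed
    from key[OF this] have "act (compose D g ki) x0 \<in> en t" using ce unfolding c'_def by simp
    moreover have "act (compose D g ki) x0 = act g x"
      using ca gA kiA x0 unfolding continuous_aut_action_def x_def by blast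
    ultimately show ?thesis by simp
  qed
  show ?thesis using xX xW gW enW[OF tp] by blast
qed


lemma sep:
  assumes ca: "continuous_aut_action D X act" and comp: "compact_space X" and haus: "Hausdorff_space X"
    and x: "x \<in> topspace X" and g: "g \<in> Aut D" and ne: "act g x \<noteq> x"
  shows "\<exists>P Q. openin X P \<and> openin X Q \<and> x \<in> P \<and> act g x \<in> Q \<and> disjnt (X closure_of P) (X closure_of Q)"
proof -
  have gx: "act g x \<in> topspace X" using act_maps[OF ca g x] .
  obtain P0 Q0 where PQ0: "openin X P0" "openin X Q0" "x \<in> P0" "act g x \<in> Q0" "disjnt P0 Q0"
    using haus x gx ne unfolding Hausdorff_space_def by metis
  have reg: "regular_space X" using compact_Hausdorff_imp_regular_space[OF comp haus] .
  have shrink: "\<exists>P. openin X P \<and> z \<in> P \<and> X closure_of P \<subseteq> P0'"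
    if "openin X P0'" "z \<in> P0'" for z P0'
  proof -
    have "closedin X (topspace X - P0')" using that(1) by blast
    moreover have "z \<in> topspace X - (topspace X - P0')" using that openin_subset by blast
    ultimately obtain P where P: "openin X P" "z \<in> P" "disjnt (topspace X - P0') (X closure_of P)"
      using reg unfolding regular_space by blast
    have "X closure_of P \<subseteq> P0'" using P(3) closure_of_subset_topspace[of X P] unfolding disjnt_def by blast
    then show ?thesis using P by blast
  qed
  obtain P where P: "openin X P" "x \<in> P" "X closure_of P \<subseteq> P0" using shrink[OF PQ0(1,3)] by blast
  obtain Q where Q: "openin X Q" "act g x \<in> Q" "X closure_of Q \<subseteq> Q0" using shrink[OF PQ0(2,4)] by blast
  have "disjnt (X closure_of P) (X closure_of Q)" using P(3) Q(3) PQ0(5) unfolding disjnt_def by blast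
  then show ?thesis using P Q by blast
qed

theorem corollary5p6:
  fixes D :: "('n::finite \<Rightarrow> rat) set"
  assumes "CARD('n) \<ge> 2"
    and "dense_Qn D"
    and "no_common_coord D"
  shows "\<forall>(X :: 'b topology) act.
           compact_space X \<and> Hausdorff_space X \<and> topspace X \<noteq> {} \<and> continuous_aut_action D X act
           \<longrightarrow> (\<exists>x\<in>topspace X. \<forall>g\<in>Aut D. act g x = x)"
proof (intro allI impI, elim conjE)
  fix X :: "'b topology" and act
  assume comp: "compact_space X" and haus: "Hausdorff_space X" and ne: "topspace X \<noteq> {}"
    and ca: "continuous_aut_action D X act"
  note dense = assms(2) and ncc = assms(3)
  obtain x0 where x0: "x0 \<in> topspace X" using ne by blast
  show "\<exists>x\<in>topspace X. \<forall>g\<in>Aut D. act g x = x"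
  proof (rule ccontr)
    assume "\<not> ?thesis"
    then have "\<forall>x\<in>topspace X. \<exists>g\<in>Aut D. act g x \<noteq> x" by blast
    then have "\<forall>x\<in>topspace X. \<exists>g P Q. g \<in> Aut D \<and> openin X P \<and> openin X Q \<and> x \<in> P \<and> act g x \<in> Q \<and> disjnt (X closure_of P) (X closure_of Q)"
      using sep[OF ca comp haus] by metis
    then obtain gf Pf Qf where F: "\<forall>x\<in>topspace X. gf x \<in> Aut D \<and> openin X (Pf x) \<and> openin X (Qf x) \<and> x \<in> Pf x \<and> act (gf x) x \<in> Qf x \<and> disjnt (X closure_of (Pf x)) (X closure_of (Qf x))"
      by metis
    define Nf where "Nf x = {z \<in> topspace X. z \<in> Pf x \<and> act (gf x) z \<in> Qf x}" for x
    have Nopen: "openin X (Nf x)" if x: "x \<in> topspace X" for x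
    proof -
      have "openin X {z \<in> topspace X. act (gf x) z \<in> Qf x}"
        using act_cont[OF ca] F x unfolding continuous_map_def by blast
      then have "openin X (Pf x \<inter> {z \<in> topspace X. act (gf x) z \<in> Qf x})" using F x by blast
      moreover have "Pf x \<inter> {z \<in> topspace X. act (gf x) z \<in> Qf x} = Nf x" unfolding Nf_def by blast
      ultimately show ?thesis by simp
    qed
    have Nx: "x \<in> Nf x" if "x \<in> topspace X" for x using F that unfolding Nf_def by blast
    have "\<exists>\<F>. finite \<F> \<and> \<F> \<subseteq> Nf ` topspace X \<and> topspace X \<subseteq> \<Union>\<F>"
      using comp unfolding compact_space_alt
    proof (elim allE impE)
      show "(\<forall>U\<in>Nf ` topspace X. openin X U) \<and> topspace X \<subseteq> \<Union> (Nf ` topspace X)" using Nopen Nx by blast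
    qed
    then obtain \<F> where Fi: "finite \<F>" "\<F> \<subseteq> Nf ` topspace X" "topspace X \<subseteq> \<Union>\<F>" by blast
    obtain Y where Y: "Y \<subseteq> topspace X" "finite Y" "\<F> = Nf ` Y" using finite_subset_image[OF Fi(1,2)] by blast
    define sideS where "sideS S y = (if y \<in> S then topspace X - X closure_of (Pf y) else topspace X - X closure_of (Qf y))" for S y
    define WS where "WS S = \<Inter>(insert (topspace X) (sideS S ` Y))" for S
    define \<W> where "\<W> = WS ` Pow Y"
    have fW: "finite \<W>" unfolding \<W>_def using Y(2) by simp
    have opW: "\<forall>W\<in>\<W>. openin X W"
    proof
      fix W assume "W \<in> \<W>"
      then obtain S where W: "W = WS S" unfolding \<W>_def by blast
      have "openin X (sideS S y)" for y unfolding sideS_def by auto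
      then show "openin X W" unfolding W WS_def using Y(2) by (intro openin_Inter) auto
    qed
    have cov: "topspace X \<subseteq> \<Union>\<W>"
    proof
      fix z assume z: "z \<in> topspace X"
      define S where "S = {y\<in>Y. z \<notin> X closure_of (Pf y)}"
      have "z \<in> sideS S y" if y: "y \<in> Y" for y
      proof (cases "y \<in> S")
        case True then show ?thesis unfolding sideS_def S_def using z by simp
      next
        case False
        then have "z \<in> X closure_of (Pf y)" unfolding S_def using y by blast
        then have "z \<notin> X closure_of (Qf y)" using F y Y(1) unfolding disjnt_def by blast
        then show ?thesis unfolding sideS_def using False z by simp
      qed
      then have "z \<in> WS S" unfolding WS_def using z by blast
      moreover have "S \<in> Pow Y" unfolding S_def by blast
      ultimately show "z \<in> \<Union>\<W>" unfolding \<W>_def by blast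
    qed
    have fG: "finite (gf ` Y)" using Y(2) by simp
    have GA: "gf ` Y \<subseteq> Aut D" using F Y(1) by blast
    obtain x W where x: "x \<in> topspace X" and W: "W \<in> \<W>" "x \<in> W" "\<forall>g\<in>gf ` Y. act g x \<in> W"
      using T3[OF dense ncc ca comp x0 fW opW cov fG GA] by blast
    obtain S where S: "W = WS S" unfolding \<W>_def using W(1) unfolding \<W>_def by blast
    obtain y where y: "y \<in> Y" "x \<in> Nf y" using Fi(3) Y(3) x by blast
    have xP: "x \<in> Pf y" and gQ: "act (gf y) x \<in> Qf y" using y(2) unfolding Nf_def by auto
    have yX: "y \<in> topspace X" using y Y(1) by blast
    have W1: "x \<in> sideS S y" using W(2) S y(1) unfolding WS_def by blast
    have W2: "act (gf y) x \<in> sideS S y" using W(3) S y(1) unfolding WS_def by blast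
    show False
    proof (cases "y \<in> S")
      case True
      have "Pf y \<subseteq> X closure_of (Pf y)" using F yX openin_subset closure_of_subset by metis
      then show False using W1 True xP unfolding sideS_def by auto
    next
      case False
      have "Qf y \<subseteq> X closure_of (Qf y)" using F yX openin_subset closure_of_subset by metis
      then show False using W2 False gQ unfolding sideS_def by auto
    qed
  qed
qed

end
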